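(* For every $n\ge 1$ and every Dyck path $D\in\mathcal{D}_n$, $\varphi(\psi(D))=\zeta(D)$, where $\zeta$ is the zeta map. In other words $\varphi\circ\psi=\zeta$.
   Context: A Dyck path of size $n$ is a lattice path from $(0,0)$ to $(n,n)$ with steps $\uparrow=(0,1)$ and $\rightarrow=(1,0)$ staying weakly above $y=x$; $\mathcal{D}_n$ is their set. Its area vector $(a_1,\dots,a_n)$ has $a_i$ equal to the number of full unit squares lying between the path and the diagonal $y=x$ in the row $i-1\le y\le i$ (area vectors are exactly the integer sequences with $a_1=0$, $0\le a_i\le a_{i-1}+1$, and determine the path). For a finite $S=\{x_1<\dots<x_n\}\subset\mathbb{R}$, $\preceq_S$ is the partial order on $[n]$ with $i\prec_S j$ iff $x_i+1<x_j$; a unit interval poset is a poset isomorphic to some $([n],\preceq_S)$ ($S$ is a starting set). $\psi$: for $D\in\mathcal{D}_n$ with area vector $(a_1,\dots,a_n)$, $\psi(D)$ is the poset on $[n]$ with $i\prec j$ iff either $a_i+2\le a_j$, or ($a_i+1=a_j$ and $i<j$); it is a unit interval poset. $\varphi$: for a unit interval poset $P$, choose a starting set $S$ of $P$ with $S\cap S^+=\varnothing$ where $S^+=\{x+1:x\in S\}$; write $S\cup S^+=\{y_1<\dots<y_{2n}\}$; $\varphi(P)$ is the Dyck path whose $i$-th step is $\uparrow$ if $y_i\in S$ and $\rightarrow$ otherwise (this is independent of the choice of $S$). Zeta map $\zeta:\mathcal{D}_n\to\mathcal{D}_n$ (Haglund's zeta map): for $D$ with area vector $(a_1,\dots,a_n)$,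 $\zeta(D)$ is the concatenation, for $\ell=0,1,2,\dots,\max_i a_i+1$ in this order, of the words obtained by scanning $j=1,2,\dots,n$ from left to right and writing $\uparrow$ whenever $a_j=\ell$ and $\rightarrow$ whenever $a_j=\ell-1$ (and nothing otherwise). *)

theory Defs
  imports Complex_Main
begin

text \<open>A path is a list of steps: True = up step (0,1), False = right step (1,0).\<close>

definition dyck_path :: "nat \<Rightarrow> bool list \<Rightarrow> bool" where
  "dyck_path n w \<longleftrightarrow> length w = 2 * n \<and> length (filter id w) = n \<and>
     (\<forall>k \<le> length w. length (filter Not (take k w)) \<le> length (filter id (take k w)))"

text \<open>Area vector (a_1,...,a_n), stored 0-indexed: entry i-1 is a_i.
  The i-th up step starts at x-coordinate x_i = number of right steps before it;
  row i-1 <= y <= i has (i-1) - x_i full squares between path and diagonal.\<close>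

definition up_positions :: "bool list \<Rightarrow> nat list" where
  "up_positions w = filter (\<lambda>j. w ! j) [0..<length w]"

definition area_vector :: "bool list \<Rightarrow> nat list" where
  "area_vector w = map (\<lambda>i. i - length (filter Not (take (up_positions w ! i) w)))
                       [0..<length (up_positions w)]"

definition psi :: "nat \<Rightarrow> bool list \<Rightarrow> nat \<Rightarrow> nat \<Rightarrow> bool" where
  "psi n D i j \<longleftrightarrow> i \<in> {1..n} \<and> j \<in> {1..n} \<and>
     (let a = area_vector D in
        a ! (i-1) + 2 \<le> a ! (j-1) \<or> (a ! (i-1) + 1 = a ! (j-1) \<and> i < j))"

definition sel :: "real set \<Rightarrow> nat \<Rightarrow> real" where
  "sel S i = sorted_list_of_set S ! (i - 1)"

definition starting_set :: "nat \<Rightarrow> (nat \<Rightarrow> nat \<Rightarrow> bool) \<Rightarrow> real set \<Rightarrow> bool" where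
  "starting_set n P S \<longleftrightarrow> finite S \<and> card S = n \<and>
     (\<exists>g. bij_betw g {1..n} {1..n} \<and>
        (\<forall>i\<in>{1..n}. \<forall>j\<in>{1..n}. P i j \<longleftrightarrow> sel S (g i) + 1 < sel S (g j)))"

definition shift1 :: "real set \<Rightarrow> real set" where
  "shift1 S = (\<lambda>x. x + 1) ` S"

definition phi :: "nat \<Rightarrow> (nat \<Rightarrow> nat \<Rightarrow> bool) \<Rightarrow> bool list" where
  "phi n P = (let S = (SOME S. starting_set n P S \<and> S \<inter> shift1 S = {}) in
              map (\<lambda>y. y \<in> S) (sorted_list_of_set (S \<union> shift1 S)))"

definition zeta :: "bool list \<Rightarrow> bool list" where
  "zeta D = (let a = area_vector D in
     concat (map (\<lambda>l. concat (map (\<lambda>aj. if aj = l then [True]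
                                         else if aj + 1 = l then [False] else []) a))
                 [0..<Max (set a) + 2]))"

end

theory Submission
  imports Defs "HOL-Library.Multiset" "HOL-Library.Product_Lexorder"
begin


lemma sl_of_strict: "sorted_wrt (<) l \<Longrightarrow> sorted_list_of_set (set l) = l"
  by (simp add: sorted_list_of_set_sort_remdups strict_sorted_iff distinct_remdups_id sorted_sort_id)

lemma sl_split:
  fixes X :: "'a::linorder set"
  assumes "finite X" "b \<in> X"
  shows "sorted_list_of_set X = sorted_list_of_set {x\<in>X. x<b} @ b # sorted_list_of_set {x\<in>X. b<x}"
proof -
  let ?l = "sorted_list_of_set {x\<in>X. x<b} @ b # sorted_list_of_set {x\<in>X. b<x}"
  have "sorted_wrt (<) ?l" using assms
    by (auto simp: sorted_wrt_append strict_sorted_list_of_set)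
  moreover have "set ?l = X" using assms by auto
  ultimately show ?thesis using sl_of_strict[of ?l] by simp
qed

fun G :: "nat \<Rightarrow> nat \<Rightarrow> nat list \<Rightarrow> bool list" where
  "G t N [] = replicate (N - t) True"
| "G t N (c#cs) = replicate (c - t) True @ False # G c N cs"

definition word :: "'a::linorder set \<Rightarrow> 'a set \<Rightarrow> bool list" where
  "word A B = map (\<lambda>x. x \<in> A) (sorted_list_of_set (A \<union> B))"

lemma word_G:
  fixes A B :: "'a::linorder set"
  assumes "finite B" "finite A" "A \<inter> B = {}"
  shows "word A B = G t (t + card A) (map (\<lambda>b. t + card {a\<in>A. a<b}) (sorted_list_of_set B))"
  using assms
proof (induction "card B" arbitrary: A B t)
  case 0
  then have "B = {}" by auto
  moreover have "map (\<lambda>x. x \<in> A) (sorted_list_of_set A) = map (\<lambda>x. True) (sorted_list_of_set A)"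
    using 0 by (intro map_cong) auto
  ultimately show ?case using 0
    by (simp add: word_def map_replicate_const)
next
  case (Suc m)
  define b where "b = Min B"
  have Bne: "B \<noteq> {}" using Suc.hyps(2) by auto
  have bB: "b \<in> B" unfolding b_def using Suc.prems(1) Bne by (rule Min_in)
  have minle: "\<And>x. x \<in> B \<Longrightarrow> b \<le> x" unfolding b_def using Suc.prems(1) by (rule Min_le)
  have bA: "b \<notin> A" using Suc bB by auto
  define A1 where "A1 = {a\<in>A. a<b}"
  define A2 where "A2 = {a\<in>A. b<a}"
  have sB: "sorted_list_of_set B = b # sorted_list_of_set (B - {b})"
    using sorted_list_of_set_nonempty[of B] Suc bB b_def by auto
  have lo: "{x\<in>A\<union>B. x<b} = A1" using minle by (auto simp: A1_def dest: leD)
  have hi: "{x\<in>A\<union>B. b<x} = A2 \<union> (B - {b})" using A2_def bA bB minle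
    by (auto simp: order_le_neq_trans)
  have m1: "map (\<lambda>x. x\<in>A) (sorted_list_of_set A1) = replicate (card A1) True"
  proof -
    have "map (\<lambda>x. x\<in>A) (sorted_list_of_set A1) = map (\<lambda>x. True) (sorted_list_of_set A1)"
      using Suc by (intro map_cong) (auto simp: A1_def)
    then show ?thesis using Suc by (simp add: map_replicate_const A1_def)
  qed
  have m2: "map (\<lambda>x. x\<in>A) (sorted_list_of_set (A2 \<union> (B - {b}))) = map (\<lambda>x. x\<in>A2) (sorted_list_of_set (A2 \<union> (B - {b})))"
    using Suc by (intro map_cong) (auto simp: A2_def)
  have w: "word A B = replicate (card A1) True @ False # word A2 (B - {b})"
    unfolding word_def using sl_split[of "A\<union>B" b] Suc bB lo hi bA m1 m2
    by simp
  have cA: "card A = card A1 + card A2"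
  proof -
    have "A = A1 \<union> A2" using bA A1_def A2_def by auto
    moreover have "A1 \<inter> A2 = {}" using A1_def A2_def by auto
    moreover have "finite A1" "finite A2" using Suc.prems(2) by (auto simp: A1_def A2_def)
    ultimately show ?thesis by (simp add: card_Un_disjoint)
  qed
  have IH: "word A2 (B - {b}) = G (t + card A1) (t + card A1 + card A2)
      (map (\<lambda>c. t + card A1 + card {a\<in>A2. a<c}) (sorted_list_of_set (B - {b})))"
    using Suc bB by (intro Suc.hyps) (auto simp: A2_def)
  have eq: "map (\<lambda>c. t + card {a\<in>A. a<c}) (sorted_list_of_set (B - {b}))
        = map (\<lambda>c. t + card A1 + card {a\<in>A2. a<c}) (sorted_list_of_set (B - {b}))"
  proof (rule map_cong[OF refl])
    fix c assume "c \<in> set (sorted_list_of_set (B - {b}))"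
    then have c: "c \<in> B" "c \<noteq> b" using Suc by auto
    then have "b < c" using minle[of c] by (simp add: order_le_neq_trans)
    then have "{a\<in>A. a<c} = A1 \<union> {a\<in>A2. a<c}" "A1 \<inter> {a\<in>A2. a<c} = {}"
      using A1_def A2_def bA by auto
    moreover have "finite A1" "finite {a\<in>A2. a<c}" using Suc by (auto simp: A1_def A2_def)
    ultimately show "t + card {a\<in>A. a<c} = t + card A1 + card {a\<in>A2. a<c}"
      by (simp add: card_Un_disjoint)
  qed
  have "G t (t + card A) (map (\<lambda>b. t + card{a\<in>A. a<b}) (sorted_list_of_set B)) = replicate (card A1) True @ False # G (t + card A1) (t + card A1 + card A2) (map (\<lambda>c. t + card A1 + card{a\<in>A2. a<c}) (sorted_list_of_set (B-{b})))"
    unfolding sB list.map eq[symmetric] cA by (simp add: A1_def[symmetric] add.assoc)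
  then show ?case using w IH by simp
qed

lemma sel_bij:
  assumes "finite S" "card S = n"
  shows "bij_betw (sel S) {1..n} S"
proof -
  have b1: "bij_betw ((!) (sorted_list_of_set S)) {..<n} S"
    using assms by (intro bij_betw_nth) auto
  have b2: "bij_betw (\<lambda>i. i - 1) {1..n} {..<n}"
    by (rule bij_betw_byWitness[where f'="Suc"]) auto
  have "sel S = (!) (sorted_list_of_set S) \<circ> (\<lambda>i. i - 1)"
    by (auto simp: sel_def)
  then show ?thesis using bij_betw_trans[OF b2 b1] by simp
qed

lemma sl_sel:
  assumes "finite S" "card S = n"
  shows "sorted_list_of_set S = map (sel S) [1..<n+1]"
  by (rule nth_equalityI) (auto simp: assms sel_def nth_upt simp del: upt_Suc)

lemma sl_shift:
  fixes S :: "real set"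
  assumes "finite S"
  shows "sorted_list_of_set (shift1 S) = map (\<lambda>x. x+1) (sorted_list_of_set S)"
proof -
  have "sorted_wrt (<) (map (\<lambda>x. x+1) (sorted_list_of_set S))"
    using strict_sorted_list_of_set[of S] by (simp add: sorted_wrt_map)
  moreover have "set (map (\<lambda>x. x+1) (sorted_list_of_set S)) = shift1 S"
    using assms by (simp add: shift1_def)
  ultimately show ?thesis using sl_of_strict[of "map (\<lambda>x. x+1) (sorted_list_of_set S)"] by simp
qed

definition hP :: "nat \<Rightarrow> (nat \<Rightarrow> nat \<Rightarrow> bool) \<Rightarrow> nat \<Rightarrow> nat" where
  "hP n P v = card {w\<in>{1..n}. \<not> P v w}"

lemma phi_word:
  assumes st: "starting_set n P S" and dj: "S \<inter> shift1 S = {}"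
  shows "word S (shift1 S) = G 0 n (sort (map (hP n P) [1..<n+1]))"
proof -
  obtain g where fin: "finite S" and cS: "card S = n" and g: "bij_betw g {1..n} {1..n}"
    and Pg: "\<forall>i\<in>{1..n}. \<forall>j\<in>{1..n}. P i j \<longleftrightarrow> sel S (g i) + 1 < sel S (g j)"
    using st unfolding starting_set_def by blast
  define c where "c x = card {a\<in>S. a < x + 1}" for x
  have fs: "finite (shift1 S)" using fin by (simp add: shift1_def)
  have w: "word S (shift1 S) = G 0 n (map c (sorted_list_of_set S))"
  proof -
    have "(\<lambda>x. card {a\<in>S. a < x + 1}) = c" by (simp add: c_def fun_eq_iff)
    then show ?thesis
      using word_G[OF fs fin dj, of 0] cS by (simp add: sl_shift[OF fin] comp_def)
  qed
  have sorted: "sorted (map c (sorted_list_of_set S))"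
  proof -
    have "sorted_wrt (\<lambda>x y. c x \<le> c y) (sorted_list_of_set S)"
      using sorted_sorted_list_of_set[of S]
      by (rule sorted_wrt_mono_rel[rotated]) (auto simp: c_def fin intro!: card_mono)
    then show ?thesis by (simp add: sorted_map)
  qed
  have sb: "bij_betw (sel S \<circ> g) {1..n} S" using bij_betw_trans[OF g sel_bij[OF fin cS]] .
  have pt: "c (sel S (g v)) = hP n P v" if v: "v \<in> {1..n}" for v
  proof -
    let ?x = "sel S (g v)"
    have xS: "?x \<in> S" using sb v by (auto simp: bij_betw_def)
    have "{a\<in>S. a < ?x + 1} = (\<lambda>w. sel S (g w)) ` {w\<in>{1..n}. \<not> P v w}"
    proof
      show "{a\<in>S. a < ?x + 1} \<subseteq> (\<lambda>w. sel S (g w)) ` {w\<in>{1..n}. \<not> P v w}"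
      proof
        fix a assume a: "a \<in> {a\<in>S. a < ?x + 1}"
        then have "a \<in> (sel S \<circ> g) ` {1..n}" using sb by (simp add: bij_betw_def)
        then obtain w where w: "w \<in> {1..n}" "a = sel S (g w)" by auto
        then show "a \<in> (\<lambda>w. sel S (g w)) ` {w\<in>{1..n}. \<not> P v w}" using Pg v a by auto
      qed
    next
      show "(\<lambda>w. sel S (g w)) ` {w\<in>{1..n}. \<not> P v w} \<subseteq> {a\<in>S. a < ?x + 1}"
      proof
        fix a assume "a \<in> (\<lambda>w. sel S (g w)) ` {w\<in>{1..n}. \<not> P v w}"
        then obtain w where w: "w \<in> {1..n}" "\<not> P v w" "a = sel S (g w)" by auto
        then have aS: "a \<in> S" using sb by (auto simp: bij_betw_def)
        have "a \<noteq> ?x + 1" using dj aS xS by (auto simp: shift1_def)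
        then show "a \<in> {a\<in>S. a < ?x + 1}" using Pg v w aS by auto
      qed
    qed
    moreover have "inj_on (\<lambda>w. sel S (g w)) {w\<in>{1..n}. \<not> P v w}"
      using sb by (auto simp: bij_betw_def comp_def intro: inj_on_subset)
    ultimately show ?thesis unfolding c_def hP_def by (simp add: card_image)
  qed
  have mu: "mset [1..<n+1] = mset_set {1..n}"
  proof -
    have "mset [1..<n+1] = mset_set (set [1..<n+1])" by (rule mset_set_set[symmetric]) simp
    then show ?thesis by (simp only: set_upt Suc_eq_plus1[symmetric] atLeastLessThanSuc_atLeastAtMost)
  qed
  have "mset (map c (sorted_list_of_set S)) = image_mset (c \<circ> sel S) (mset_set {1..n})"
    unfolding sl_sel[OF fin cS] mset_map map_map mu by simp
  also have "\<dots> = image_mset (c \<circ> sel S) (image_mset g (mset_set {1..n}))"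
    using g by (simp add: image_mset_mset_set bij_betw_def)
  also have "\<dots> = image_mset (hP n P) (mset_set {1..n})"
    by (simp add: multiset.map_comp) (rule image_mset_cong, simp add: pt)
  also have "\<dots> = mset (map (hP n P) [1..<n+1])"
    unfolding mset_map mu by simp
  finally have "sort (map (hP n P) [1..<n+1]) = map c (sorted_list_of_set S)"
    using sorted by (intro properties_for_sort) auto
  then show ?thesis using w by simp
qed



lemma lexcmp:
  fixes p q v w N :: nat
  assumes "v < N" "w < N"
  shows "p*N + v < q*N + w \<longleftrightarrow> p < q \<or> (p = q \<and> v < w)"
proof (cases "p < q")
  case True
  then have "Suc p * N \<le> q * N" by (intro mult_le_mono1) simp
  then show ?thesis using True assms by simp
next
  case False
  show ?thesis
  proof (cases "p = q")
    case True then show ?thesis by simp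
  next
    case False2: False
    then have "Suc q * N \<le> p * N" using False by (intro mult_le_mono1) simp
    then show ?thesis using False False2 assms by simp
  qed
qed

lemma lexeq:
  fixes p q v w N :: nat
  assumes "v < N" "w < N" "p*N + v = q*N + w"
  shows "p = q \<and> v = w"
  using lexcmp[OF assms(1,2), of p q] lexcmp[OF assms(2,1), of q p] assms(3) by auto

lemma exists_S:
  assumes len: "length (area_vector D) = n"
  shows "\<exists>S. starting_set n (psi n D) S \<and> S \<inter> shift1 S = {}"
proof -
  define a where "a = area_vector D"
  define K where "K v = a!(v-1)*(n+1) + v" for v
  define x where "x v = real (K v) / real (n+1)" for v
  have x1: "x v + 1 = real (K v + (n+1)) / real (n+1)" for v
    by (simp add: x_def field_simps)
  have K1: "K v + (n+1) = (a!(v-1)+1)*(n+1) + v" for v by (simp add: K_def)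
  have lt: "x v + 1 < x w \<longleftrightarrow> (a!(v-1)+1 < a!(w-1) \<or> (a!(v-1)+1 = a!(w-1) \<and> v < w))"
    if "v \<in> {1..n}" "w \<in> {1..n}" for v w
  proof -
    have "x v + 1 < x w \<longleftrightarrow> K v + (n+1) < K w"
    proof -
      have "x v + 1 < x w \<longleftrightarrow> real (K v + (n+1)) / real (n+1) < real (K w) / real (n+1)"
        by (simp only: x1) (simp add: x_def)
      also have "\<dots> \<longleftrightarrow> real (K v + (n+1)) < real (K w)"
        by (simp add: divide_less_cancel)
      finally show ?thesis by linarith
    qed
    also have "\<dots> \<longleftrightarrow> (a!(v-1)+1 < a!(w-1) \<or> (a!(v-1)+1 = a!(w-1) \<and> v < w))"
      unfolding K1 using that by (simp only: K_def, intro lexcmp) auto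
    finally show ?thesis .
  qed
  have ne: "x v + 1 \<noteq> x w" if "v \<in> {1..n}" "w \<in> {1..n}" for v w
  proof
    assume "x v + 1 = x w"
    then have "real (K v + (n+1)) / real (n+1) = real (K w) / real (n+1)"
      by (simp only: x1) (simp add: x_def)
    then have "K v + (n+1) = K w" by (simp add: divide_cancel_right del: of_nat_add)
    then have "(a!(v-1)+1)*(n+1) + v = a!(w-1)*(n+1) + w" by (simp add: K_def algebra_simps)
    then have "a!(v-1)+1 = a!(w-1) \<and> v = w"
      using that lexeq[where v=v and w=w and N="n+1" and p="a!(v-1)+1" and q="a!(w-1)"] by auto
    then show False by auto
  qed
  have inj: "inj_on x {1..n}"
  proof
    fix v w assume vw: "v \<in> {1..n}" "w \<in> {1..n}" "x v = x w"
    then have "K v = K w" by (simp add: x_def)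
    then have "a!(v-1)*(n+1) + v = a!(w-1)*(n+1) + w" by (simp only: K_def)
    then show "v = w"
      using vw lexeq[where v=v and w=w and N="n+1" and p="a!(v-1)" and q="a!(w-1)"] by auto
  qed
  define S where "S = x ` {1..n}"
  have fin: "finite S" and cS: "card S = n" using inj by (auto simp: S_def card_image)
  have bx: "bij_betw x {1..n} S" using inj by (simp add: S_def inj_on_imp_bij_betw)
  have bs: "bij_betw (sel S) {1..n} S" using sel_bij[OF fin cS] .
  define g where "g = inv_into {1..n} (sel S) \<circ> x"
  have bg: "bij_betw g {1..n} {1..n}"
    unfolding g_def using bij_betw_trans[OF bx bij_betw_inv_into[OF bs]] .
  have sg: "sel S (g v) = x v" if "v \<in> {1..n}" for v
  proof -
    have "x v \<in> sel S ` {1..n}" using bs bx that by (auto simp: bij_betw_def)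
    then show ?thesis by (simp add: g_def f_inv_into_f)
  qed
  have "starting_set n (psi n D) S"
    unfolding starting_set_def
  proof (intro conjI exI[of _ g] ballI)
    show "finite S" "card S = n" "bij_betw g {1..n} {1..n}" using fin cS bg by auto
  next
    fix i j assume ij: "i \<in> {1..n}" "j \<in> {1..n}"
    show "psi n D i j \<longleftrightarrow> sel S (g i) + 1 < sel S (g j)"
      unfolding sg[OF ij(1)] sg[OF ij(2)] lt[OF ij] using ij
      by (auto simp: psi_def Let_def a_def)
  qed
  moreover have "S \<inter> shift1 S = {}"
    using ne by (fastforce simp: S_def shift1_def)
  ultimately show ?thesis by blast
qed



lemma cif: "concat (map (\<lambda>j. if P j then [True] else if Q j then [False] else []) xs)
   = map P (filter (\<lambda>j. P j \<or> Q j) xs)"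
  by (induction xs) auto

lemma sorted_blocks:
  fixes xs :: "nat list" and ys :: "nat \<Rightarrow> nat list"
  assumes "sorted_wrt (<) xs" "\<And>l. sorted_wrt (<) (ys l)"
  shows "sorted_wrt (<) (concat (map (\<lambda>l. map (Pair l) (ys l)) xs))"
  using assms
proof (induction xs)
  case Nil then show ?case by simp
next
  case (Cons l xs)
  then show ?case
    by (auto simp: sorted_wrt_append sorted_wrt_map)
qed

lemma zeta_word:
  assumes ne: "area_vector D \<noteq> []"
  shows "zeta D = word ((\<lambda>j. (area_vector D!j, j)) ` {0..<length (area_vector D)})
                       ((\<lambda>j. (area_vector D!j+1, j)) ` {0..<length (area_vector D)})"
proof -
  define a where "a = area_vector D"
  define n where "n = length a"
  define M where "M = Max (set a)"
  define A where "A = (\<lambda>j. (a!j, j)) ` {0..<n}"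
  define B where "B = (\<lambda>j. (a!j+1, j)) ` {0..<n}"
  define L where "L = concat (map (\<lambda>l. map (Pair l) (filter (\<lambda>j. a!j = l \<or> a!j+1 = l) [0..<n])) [0..<M+2])"
  have aM: "a!j \<le> M" if "j < n" for j
    using that ne by (simp add: M_def n_def a_def)
  have z: "zeta D = map (\<lambda>p. a!(snd p) = fst p) L"
  proof -
    have "zeta D = concat (map (\<lambda>l. concat (map (\<lambda>j. if a!j = l then [True] else if a!j+1 = l then [False] else []) [0..<n])) [0..<M+2])"
      unfolding zeta_def Let_def a_def[symmetric] M_def[symmetric] n_def
      by (subst (1) map_nth[symmetric, of a]) (simp only: map_map comp_def)
    also have "\<dots> = concat (map (\<lambda>l. map (\<lambda>j. a!j = l) (filter (\<lambda>j. a!j = l \<or> a!j+1 = l) [0..<n])) [0..<M+2])"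
      by (simp only: cif)
    also have "\<dots> = map (\<lambda>p. a!(snd p) = fst p) L"
      by (simp add: L_def map_concat comp_def)
    finally show ?thesis .
  qed
  have sL: "sorted_wrt (<) L" unfolding L_def
    by (rule sorted_blocks) (auto intro: sorted_wrt_filter simp del: upt_Suc)
  have setL: "set L = A \<union> B"
  proof
    show "set L \<subseteq> A \<union> B" by (auto simp: L_def A_def B_def image_iff)
  next
    show "A \<union> B \<subseteq> set L"
      using aM by (fastforce simp: L_def A_def B_def)
  qed
  have Lsl: "sorted_list_of_set (A \<union> B) = L" using sl_of_strict[OF sL] setL by simp
  have "map (\<lambda>p. a!(snd p) = fst p) L = map (\<lambda>p. p \<in> A) L"
    by (rule map_cong[OF refl]) (auto simp: setL A_def B_def)
  then show ?thesis using z Lsl by (simp add: word_def A_def B_def a_def n_def)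
qed



lemma zeta_G:
  assumes len: "length (area_vector D) = n"
  shows "word ((\<lambda>j. (area_vector D!j, j)) ` {0..<length (area_vector D)})
              ((\<lambda>j. (area_vector D!j+1, j)) ` {0..<length (area_vector D)})
         = G 0 n (sort (map (hP n (psi n D)) [1..<n+1]))"
proof -
  define a where "a = area_vector D"
  define \<alpha> where "\<alpha> j = (a!j, j)" for j
  define \<beta> where "\<beta> j = (a!j+1, j)" for j
  define A where "A = \<alpha> ` {0..<n}"
  define B where "B = \<beta> ` {0..<n}"
  define f where "f b = card {p\<in>A. p<b}" for b
  have ia: "inj \<alpha>" and ib: "inj \<beta>" by (auto simp: inj_def \<alpha>_def \<beta>_def)
  have fA: "finite A" "finite B" "card A = n" using ia
    by (auto simp: A_def B_def card_image inj_on_subset)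
  have dj: "A \<inter> B = {}" by (auto simp: A_def B_def \<alpha>_def \<beta>_def)
  have w: "word A B = G 0 n (map f (sorted_list_of_set B))"
  proof -
    have "(\<lambda>b. card {p\<in>A. p<b}) = f" by (simp add: f_def fun_eq_iff)
    then show ?thesis using word_G[OF fA(2,1) dj, of 0] fA(3) by simp
  qed
  have sorted: "sorted (map f (sorted_list_of_set B))"
  proof -
    have "sorted_wrt (\<lambda>x y. f x \<le> f y) (sorted_list_of_set B)"
      using sorted_sorted_list_of_set[of B]
      by (rule sorted_wrt_mono_rel[rotated]) (auto simp: f_def fA intro!: card_mono)
    then show ?thesis by (simp add: sorted_map)
  qed
  have pt: "f (\<beta> j) = hP n (psi n D) (Suc j)" if j: "j < n" for j
  proof -
    have "{p\<in>A. p < \<beta> j} = (\<lambda>w. \<alpha> (w-1)) ` {w\<in>{1..n}. \<not> psi n D (Suc j) w}"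
    proof
      show "{p\<in>A. p < \<beta> j} \<subseteq> (\<lambda>w. \<alpha> (w-1)) ` {w\<in>{1..n}. \<not> psi n D (Suc j) w}"
      proof
        fix p assume "p \<in> {p\<in>A. p < \<beta> j}"
        then obtain i where i: "i < n" "p = \<alpha> i" "\<alpha> i < \<beta> j" by (auto simp: A_def)
        then have "\<not> psi n D (Suc j) (Suc i)" using j
          by (auto simp: psi_def Let_def a_def[symmetric] \<alpha>_def \<beta>_def)
        then show "p \<in> (\<lambda>w. \<alpha> (w-1)) ` {w\<in>{1..n}. \<not> psi n D (Suc j) w}"
          using i by (intro image_eqI[of _ _ "Suc i"]) auto
      qed
    next
      show "(\<lambda>w. \<alpha> (w-1)) ` {w\<in>{1..n}. \<not> psi n D (Suc j) w} \<subseteq> {p\<in>A. p < \<beta> j}"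
      proof
        fix p assume "p \<in> (\<lambda>w. \<alpha> (w-1)) ` {w\<in>{1..n}. \<not> psi n D (Suc j) w}"
        then obtain w where w: "w \<in> {1..n}" "\<not> psi n D (Suc j) w" "p = \<alpha> (w-1)" by auto
        then have "\<alpha> (w-1) < \<beta> j" using j
          by (cases "w - 1 = j") (auto simp: psi_def Let_def a_def[symmetric] \<alpha>_def \<beta>_def)
        moreover have "\<alpha> (w-1) \<in> A" using w by (auto simp: A_def)
        ultimately show "p \<in> {p\<in>A. p < \<beta> j}" using w by auto
      qed
    qed
    moreover have "inj_on (\<lambda>w. \<alpha> (w-1)) {w\<in>{1..n}. \<not> psi n D (Suc j) w}"
      by (auto simp: inj_on_def \<alpha>_def)
    ultimately show ?thesis unfolding f_def hP_def by (simp add: card_image)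
  qed
  have mu: "mset [1..<n+1] = mset_set {1..n}"
  proof -
    have "mset [1..<n+1] = mset_set (set [1..<n+1])" by (rule mset_set_set[symmetric]) simp
    then show ?thesis by (simp only: set_upt Suc_eq_plus1[symmetric] atLeastLessThanSuc_atLeastAtMost)
  qed
  have "mset (map f (sorted_list_of_set B)) = image_mset f (mset_set B)"
    using fA(2) by (simp add: mset_set_set[symmetric])
  also have "\<dots> = image_mset (f \<circ> \<beta>) (mset_set {0..<n})"
    using ib by (simp add: B_def image_mset_mset_set[symmetric] inj_on_subset multiset.map_comp)
  also have "\<dots> = image_mset (hP n (psi n D) \<circ> Suc) (mset_set {0..<n})"
    by (rule image_mset_cong) (simp add: pt)
  also have "\<dots> = image_mset (hP n (psi n D)) (mset_set {1..n})"
  proof -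
    have "Suc ` {0..<n} = {1..n}" by (simp only: image_Suc_atLeastLessThan atLeastLessThanSuc_atLeastAtMost) simp
    then have "image_mset Suc (mset_set {0..<n}) = mset_set {1..n}"
      using image_mset_mset_set[of Suc "{0..<n}"] by simp
    then show ?thesis by (simp add: multiset.map_comp[symmetric])
  qed
  also have "\<dots> = mset (map (hP n (psi n D)) [1..<n+1])"
    unfolding mset_map mu by simp
  finally have "sort (map (hP n (psi n D)) [1..<n+1]) = map f (sorted_list_of_set B)"
    using sorted by (intro properties_for_sort) auto
  then show ?thesis using w len by (simp add: A_def B_def \<alpha>_def \<beta>_def a_def)
qed

lemma len_filter_idx: "length (filter (\<lambda>j. w!j) [0..<length w]) = length (filter id w)"
proof -
  have "length (filter id w) = length (filter id (map (nth w) [0..<length w]))" by (simp only: map_nth)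
  also have "\<dots> = length (filter (\<lambda>j. w!j) [0..<length w])" by (simp add: filter_map comp_def)
  finally show ?thesis by simp
qed

theorem mainTheorem5:
  fixes n :: nat and D :: "bool list"
  assumes "n \<ge> 1" and "dyck_path n D"
  shows "phi n (psi n D) = zeta D"
proof -
  have "length (area_vector D) = length (filter id D)"
    unfolding area_vector_def up_positions_def by (simp only: length_map length_upt len_filter_idx diff_zero)
  then have len: "length (area_vector D) = n"
    using assms(2) by (simp add: dyck_path_def)
  have ne: "area_vector D \<noteq> []" using len assms(1) by auto
  define S where "S = (SOME S. starting_set n (psi n D) S \<and> S \<inter> shift1 S = {})"
  have SS: "starting_set n (psi n D) S \<and> S \<inter> shift1 S = {}"
    unfolding S_def by (rule someI_ex[OF exists_S[OF len]])
  have "phi n (psi n D) = word S (shift1 S)"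
    unfolding phi_def word_def Let_def S_def by (rule refl)
  also have "\<dots> = G 0 n (sort (map (hP n (psi n D)) [1..<n+1]))"
    using phi_word SS by blast
  also have "\<dots> = zeta D"
    by (simp only: zeta_word[OF ne] zeta_G[OF len])
  finally show ?thesis .
qed

end
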